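(* Fix a horizon $T$ (an even positive integer), a number of experts $n\ge 2$, and an error constant $\Delta\in(0,1]$. Then there exist a prompt $x$, a finite vocabulary $\mathcal{Y}$, deterministic expert policies $\pi_1,\dots,\pi_n$, and a family $\mathcal{R}$ of token-level reward functions $r$ with values in $[0,1]$ (all on the same deterministic token-level MDP described in the context) such that: (i) for every $r\in\mathcal{R}$, with $\pi^*$ a deterministic optimal policy for $r$, the following three properties hold: 1. (Existence of a near-optimal path) there exist $\varepsilon\in[0,1]$ with $\varepsilon\le\Delta$ and a routing sequence $P^*=(n_1^*,\dots,n_T^* )\in[n]^T$ such that $V^{\pi^*}(x)=V^{P^*}+\varepsilon$; 2. (Single policy coverage) for every $t\in\{0,\dots,T-1\}$, letting $y_{\le t}$ be the prefix generated by $\pi^*$ from $x$, $\Big|\max_{i\in[n]} Q^{\pi^*}\big(x,y_{\le t},\pi_i(x,y_{\le t})\big)-Q^{\pi^*}\big(x,y_{\le t},\pi^*(x,y_{\le t})\big)\Big|\le\Delta;$ 3. (Generalization coverage) for every prefix $(x,y_{\le t})$ with $t<T$ such that some full response $(x,y_{\le T})$ extending it satisfies $R(x,y_{\le T})\ge V^{\pi^*}(x)-\Delta$, the same inequality $\Big|\max_{i\in[n]} Q^{\pi^*}\big(x,y_{\le t},\pi_i(x,y_{\le t})\big)-Q^{\pi^*}\big(x,y_{\le t},\pi^*(x,y_{\le t})\big)\Big|\le\Delta$ holds; (ii) for every token-level routing algorithm $\mathcal{A}:\mathcal{O}\to[n]$ (with observations as defined in the context), there exists $r\in\mathcal{R}$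 such that $V^{\pi_{\mathcal{A}}}(x) < V^{\pi^*}(x)-T/2+2$, i.e. no such algorithm achieves $V^{\pi_{\mathcal{A}}}\ge V^{\pi^*}-T/2+2$ for all rewards in the family.
   Context: Token-level MDP for decoding: a prompt $x$, vocabulary $\mathcal{Y}$, states are prefixes $(x,y_{\le t})=(x,y_1,\dots,y_t)$, an action is the next token $y_{t+1}\in\mathcal{Y}$, transitions are deterministic: $(x,y_{\le t})\mapsto(x,y_{\le t},y_{t+1})$, responses have fixed length $T$. A reward function assigns $r(x,y_{\le t+1})\in[0,1]$ to each prefix; the total reward of a prefix is $R(x,y_{\le t})=\sum_{i=1}^t r(x,y_{\le i})$. For a deterministic policy $\pi$ (a map from prefixes to next tokens, written $\pi(x,y_{\le t})$), $V^{\pi}(x,y_{\le t})=\sum_{i=t+1}^T r(x,y_{\le i})$ along the continuation generated by $\pi$, and $Q^{\pi}(x,y_{\le t},y_{t+1})=r(x,y_{\le t+1})+V^{\pi}(x,y_{\le t+1})$; we also write $Q^{\pi}(x,y_{\le t+1})$ for $Q^{\pi}(x,y_{\le t},y_{t+1})$. $\pi^*$ is an optimal policy (maximizing $V$ from every state), $V^*=V^{\pi^*}$. Expert policies $\pi_1,\dots,\pi_n$ are deterministic. A routing sequence $P=(n_1,\dots,n_T)\in[n]^T$ generates the response $y_k=\pi_{n_k}(x,y_{\le k-1})$, and $V^{P}=R(x,y_{\le T})$ for that response. A token-level routing algorithm $\mathcal{A}:\mathcal{O}\to[n]$ works as follows: at each step $t=0,\dots,T-1$, at the currently visited prefix $(x,y_{\le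 t})$ it receives the observation $o_t=\{x,\ y_{\le t},\ \{Q^{\pi^*}(x,y_{\le k})\}_{k=1}^t,\ \{Q^{\pi^*}(x,y_{\le t},y)\}_{y\in\mathcal{Y}}\}$, outputs an expert index $n_{t+1}=\mathcal{A}(o_t)$, and the next token is $y_{t+1}=\pi_{n_{t+1}}(x,y_{\le t})$; $\mathcal{O}$ is the union over $t$ of the possible observations, and $\pi_{\mathcal{A}}$ is the resulting decoding policy with value $V^{\pi_{\mathcal{A}}}(x)=R(x,y_{\le T})$ for the generated response. *)

theory Defs
  imports Complex_Main
begin

text \<open>Tokens are natural numbers, the vocabulary is a
finite set Y of tokens, the prompt x is a natural number, a prefix y_{<=t} is a token list
of length t.\<close>

type_synonym policy = "nat \<Rightarrow> nat list \<Rightarrow> nat"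
type_synonym reward = "nat \<Rightarrow> nat list \<Rightarrow> real"

fun rollout :: "policy \<Rightarrow> nat \<Rightarrow> nat list \<Rightarrow> nat \<Rightarrow> nat list" where
  "rollout pol x ys 0 = ys"
| "rollout pol x ys (Suc k) = (let zs = rollout pol x ys k in zs @ [pol x zs])"

definition totR :: "reward \<Rightarrow> nat \<Rightarrow> nat list \<Rightarrow> real" where
  "totR r x ys = (\<Sum>i = 1..length ys. r x (take i ys))"

definition Vpi :: "nat \<Rightarrow> reward \<Rightarrow> policy \<Rightarrow> nat \<Rightarrow> nat list \<Rightarrow> real" where
  "Vpi T r pol x ys =
     (let zs = rollout pol x ys (T - length ys) in
      \<Sum>i \<in> {length ys <.. T}. r x (take i zs))"

definition Qpi :: "nat \<Rightarrow> reward \<Rightarrow> policy \<Rightarrow> nat \<Rightarrow> nat list \<Rightarrow> nat \<Rightarrow> real" where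
  "Qpi T r pol x ys y = r x (ys @ [y]) + Vpi T r pol x (ys @ [y])"

definition Qpref :: "nat \<Rightarrow> reward \<Rightarrow> policy \<Rightarrow> nat \<Rightarrow> nat list \<Rightarrow> real" where
  "Qpref T r pol x ys = Qpi T r pol x (butlast ys) (last ys)"

definition valid_prefix :: "nat set \<Rightarrow> nat \<Rightarrow> nat list \<Rightarrow> bool" where
  "valid_prefix Y T ys \<longleftrightarrow> set ys \<subseteq> Y \<and> length ys \<le> T"

definition valid_policy :: "nat set \<Rightarrow> nat \<Rightarrow> nat \<Rightarrow> policy \<Rightarrow> bool" where
  "valid_policy Y T x pol \<longleftrightarrow>
     (\<forall>ys. set ys \<subseteq> Y \<and> length ys < T \<longrightarrow> pol x ys \<in> Y)"

definition optimal_policy :: "nat set \<Rightarrow> nat \<Rightarrow> reward \<Rightarrow> nat \<Rightarrow> policy \<Rightarrow> bool" where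
  "optimal_policy Y T r x pol \<longleftrightarrow> valid_policy Y T x pol \<and>
     (\<forall>pol'. valid_policy Y T x pol' \<longrightarrow>
        (\<forall>ys. valid_prefix Y T ys \<longrightarrow> Vpi T r pol' x ys \<le> Vpi T r pol x ys))"

fun route_gen :: "(nat \<Rightarrow> policy) \<Rightarrow> nat list \<Rightarrow> nat \<Rightarrow> nat \<Rightarrow> nat list" where
  "route_gen pis P x 0 = []"
| "route_gen pis P x (Suc k) = (let ys = route_gen pis P x k in ys @ [pis (P ! k) x ys])"

definition VP :: "reward \<Rightarrow> (nat \<Rightarrow> policy) \<Rightarrow> nat list \<Rightarrow> nat \<Rightarrow> real" where
  "VP r pis P x = totR r x (route_gen pis P x (length P))"

text \<open>Observations o_t = (x, y_{<=t}, [Q*(x,y_{<=1}),...,Q*(x,y_{<=t})], y \<mapsto> Q*(x,y_{<=t},y) on Y).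
The last component is a partial map defined exactly on the vocabulary Y.\<close>
type_synonym observation = "nat \<times> nat list \<times> real list \<times> (nat \<Rightarrow> real option)"

definition observe :: "nat set \<Rightarrow> nat \<Rightarrow> reward \<Rightarrow> policy \<Rightarrow> nat \<Rightarrow> nat list \<Rightarrow> observation" where
  "observe Y T r pistar x ys =
     (x, ys, map (\<lambda>k. Qpref T r pistar x (take k ys)) [1..<Suc (length ys)],
      (\<lambda>y. if y \<in> Y then Some (Qpi T r pistar x ys y) else None))"

fun alg_gen :: "nat set \<Rightarrow> nat \<Rightarrow> reward \<Rightarrow> policy \<Rightarrow> (nat \<Rightarrow> policy)
      \<Rightarrow> (observation \<Rightarrow> nat) \<Rightarrow> nat \<Rightarrow> nat \<Rightarrow> nat list" where
  "alg_gen Y T r pistar pis A x 0 = []"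
| "alg_gen Y T r pistar pis A x (Suc t) =
     (let ys = alg_gen Y T r pistar pis A x t in
      ys @ [pis (A (observe Y T r pistar x ys)) x ys])"

definition V_alg :: "nat set \<Rightarrow> nat \<Rightarrow> reward \<Rightarrow> policy \<Rightarrow> (nat \<Rightarrow> policy)
      \<Rightarrow> (observation \<Rightarrow> nat) \<Rightarrow> nat \<Rightarrow> real" where
  "V_alg Y T r pistar pis A x = totR r x (alg_gen Y T r pistar pis A x T)"

definition coverage_at :: "nat \<Rightarrow> nat \<Rightarrow> reward \<Rightarrow> policy \<Rightarrow> (nat \<Rightarrow> policy) \<Rightarrow> nat
      \<Rightarrow> real \<Rightarrow> nat list \<Rightarrow> bool" where
  "coverage_at T n r pistar pis x \<Delta> ys \<longleftrightarrow>
     \<bar>Max ((\<lambda>i. Qpi T r pistar x ys (pis i x ys)) ` {1..n}) - Qpi T r pistar x ys (pistar x ys)\<bar> \<le> \<Delta>"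

end

theory Submission imports Defs begin

lemma rollout_len: "length (rollout pol x ys m) = length ys + m"
  by (induction m) (auto simp: Let_def)

lemma rollout_prefix: "\<exists>zs. rollout pol x ys (m + k) = rollout pol x ys m @ zs"
proof (induction k)
  case 0 then show ?case by simp
next
  case (Suc k)
  then obtain zs where "rollout pol x ys (m + k) = rollout pol x ys m @ zs" by blast
  then show ?case by (auto simp: Let_def)
qed

lemma rollout_shift: "rollout pol x ys (Suc m) = rollout pol x (ys @ [pol x ys]) m"
  by (induction m) (auto simp: Let_def)

lemma rollout_const: "rollout (\<lambda>x ys. c) x ys m = ys @ replicate m c"
  by (induction m) (auto simp: Let_def replicate_append_same)

lemma rollout_set: "valid_policy Y T x pol \<Longrightarrow> set ys \<subseteq> Y \<Longrightarrow> length ys + m \<le> T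
  \<Longrightarrow> set (rollout pol x ys m) \<subseteq> Y"
proof (induction m)
  case 0 then show ?case by simp
next
  case (Suc m)
  then have "set (rollout pol x ys m) \<subseteq> Y" by simp
  moreover have "length (rollout pol x ys m) < T" using Suc.prems by (simp add: rollout_len)
  ultimately show ?case using Suc.prems(1) by (auto simp: Let_def valid_policy_def)
qed

lemma Vpi_le:
  assumes "\<forall>ys. r x ys \<le> 1" "length ys \<le> T"
  shows "Vpi T r pol x ys \<le> real T - real (length ys)"
proof -
  have "Vpi T r pol x ys \<le> real (card {length ys<..T}) * 1"
    unfolding Vpi_def Let_def by (rule sum_bounded_above) (use assms in auto)
  then show ?thesis using assms by simp
qed

lemma Vpi_step:
  assumes "length ys < T"
  shows "Vpi T r pol x ys = r x (ys @ [pol x ys]) + Vpi T r pol x (ys @ [pol x ys])"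
proof -
  obtain m where m: "T - length ys = Suc m" using assms by (metis Suc_diff_Suc)
  define Z where "Z = rollout pol x (ys @ [pol x ys]) m"
  have m2: "T - length (ys @ [pol x ys]) = m" using m by simp
  obtain zs where zs: "Z = (ys @ [pol x ys]) @ zs"
    using rollout_prefix[of pol x "ys @ [pol x ys]" 0 m] unfolding Z_def by auto
  have A: "Vpi T r pol x ys = (\<Sum>i\<in>{length ys<..T}. r x (take i Z))"
    unfolding Vpi_def Let_def m rollout_shift Z_def ..
  have B: "Vpi T r pol x (ys @ [pol x ys]) = (\<Sum>i\<in>{Suc (length ys)<..T}. r x (take i Z))"
    unfolding Vpi_def Let_def m2 Z_def by simp
  have S: "{length ys<..T} = insert (Suc (length ys)) {Suc (length ys)<..T}"
    using assms by auto
  have "take (Suc (length ys)) Z = ys @ [pol x ys]" using zs by simp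
  then show ?thesis unfolding A B S by simp
qed

lemma Vstar:
  assumes opt: "optimal_policy Y T r x pistar" and two: "(2::nat) \<in> Y"
    and le1: "\<forall>ys. r x ys \<le> 1" and l2: "\<forall>ys. ys \<noteq> [] \<longrightarrow> last ys = 2 \<longrightarrow> r x ys = 1"
    and vp: "valid_prefix Y T ys"
  shows "Vpi T r pistar x ys = real T - real (length ys)"
proof (rule antisym)
  show "Vpi T r pistar x ys \<le> real T - real (length ys)"
    using Vpi_le le1 vp by (auto simp: valid_prefix_def)
next
  have vpol: "valid_policy Y T x (\<lambda>x ys. 2)" using two by (simp add: valid_policy_def)
  have "Vpi T r (\<lambda>x ys. 2) x ys = (\<Sum>i\<in>{length ys<..T}. 1)"
    unfolding Vpi_def Let_def rollout_const
  proof (rule sum.cong)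
    fix i assume i: "i \<in> {length ys<..T}"
    then have "take i (ys @ replicate (T - length ys) 2) = ys @ replicate (i - length ys) 2"
      by (auto simp: take_replicate min_def)
    moreover have "i - length ys > 0" using i by auto
    ultimately show "r x (take i (ys @ replicate (T - length ys) 2)) = 1"
      using l2 by (metis (no_types, lifting) append_is_Nil_conv last_appendR last_replicate
          replicate_empty not_gr0)
  qed simp
  also have "\<dots> = real T - real (length ys)" using vp by (simp add: valid_prefix_def)
  finally show "real T - real (length ys) \<le> Vpi T r pistar x ys"
    using opt vpol vp unfolding optimal_policy_def by metis
qed


definition rw :: "real \<Rightarrow> nat \<Rightarrow> reward" where
  "rw \<Delta> a x ys = (if ys = [] then 0
     else if length ys = 1 then (if hd ys = 2 then 1 else 1 - \<Delta>)
     else if hd ys = a \<or> hd ys = 2 \<or> ys ! 1 = 2 \<or> last ys = 2 then 1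
     else if length ys = 2 then 1 - \<Delta> else 0)"

definition pisX :: "nat \<Rightarrow> policy" where
  "pisX i = (\<lambda>x ys. if i = 2 then 1 else 0)"

definition bad :: "nat \<Rightarrow> nat list \<Rightarrow> bool" where
  "bad a ys \<longleftrightarrow> length ys \<ge> 2 \<and> hd ys \<noteq> a \<and> hd ys \<noteq> 2 \<and> ys ! 1 \<noteq> 2"

lemma rw_bounds: "0 < \<Delta> \<Longrightarrow> \<Delta> \<le> 1 \<Longrightarrow> 0 \<le> rw \<Delta> a x ys \<and> rw \<Delta> a x ys \<le> 1"
  by (auto simp: rw_def)

lemma rw_last2: "rw \<Delta> a x ys = 1" if "ys \<noteq> []" "last ys = 2"
proof (cases "length ys = 1")
  case True
  then obtain b where "ys = [b]" by (metis One_nat_def length_0_conv length_Suc_conv)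
  then show ?thesis using that by (simp add: rw_def)
next
  case False
  then show ?thesis using that by (simp add: rw_def)
qed

lemma rw_good: "0 < \<Delta> \<Longrightarrow> \<not> bad a ys \<Longrightarrow> rw \<Delta> a x (ys @ [0]) \<ge> 1 - \<Delta>"
  by (cases ys) (auto simp: rw_def bad_def nth_append Suc_le_eq)

lemma sum_split3:
  fixes f :: "nat \<Rightarrow> real"
  assumes "T \<ge> 2" "\<forall>i\<in>{3..T}. f i \<le> b"
  shows "sum f {1..T} \<le> f 1 + f 2 + real (T - 2) * b"
proof -
  have S: "{1..T} = insert 1 (insert 2 {3..T})" using assms(1) by auto
  have "sum f {3..T} \<le> real (card {3..T}) * b" by (rule sum_bounded_above) (use assms in auto)
  then show ?thesis unfolding S by simp
qed

lemma notnear: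
  assumes "0 < \<Delta>" "\<Delta> \<le> 1" "bad a ys" "length (ys @ zs) = T"
  shows "totR (rw \<Delta> a) x (ys @ zs) \<le> real T - 2 * \<Delta>"
proof -
  have T2: "T \<ge> 2" using assms(3,4) by (auto simp: bad_def)
  have "totR (rw \<Delta> a) x (ys @ zs) \<le> rw \<Delta> a x (take 1 (ys @ zs)) + rw \<Delta> a x (take 2 (ys @ zs))
        + real (T - 2) * 1"
    unfolding totR_def assms(4) by (rule sum_split3[OF T2]) (use rw_bounds assms in auto)
  moreover have "rw \<Delta> a x (take 1 (ys @ zs)) = 1 - \<Delta>" using assms(3)
    by (cases ys) (auto simp: bad_def rw_def)
  moreover have "rw \<Delta> a x (take 2 (ys @ zs)) = 1 - \<Delta>" using assms(3)
    by (cases ys; cases "tl ys") (auto simp: bad_def rw_def)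
  ultimately show ?thesis using T2 by (simp add: of_nat_diff)
qed


lemma Vstar_rw:
  assumes "0 < \<Delta>" "\<Delta> \<le> 1" "optimal_policy {0,1,2} T (rw \<Delta> a) x pistar"
    "set ys \<subseteq> {0,1,2}" "length ys \<le> T"
  shows "Vpi T (rw \<Delta> a) pistar x ys = real T - real (length ys)"
  by (rule Vstar[OF assms(3)]) (use assms rw_bounds rw_last2 in \<open>auto simp: valid_prefix_def\<close>)

lemma Q_rw:
  assumes "0 < \<Delta>" "\<Delta> \<le> 1" "optimal_policy {0,1,2} T (rw \<Delta> a) x pistar"
    "set ys \<subseteq> {0,1,2}" "length ys < T" "y \<in> {0,1,2}"
  shows "Qpi T (rw \<Delta> a) pistar x ys y = rw \<Delta> a x (ys @ [y]) + (real T - real (length ys) - 1)"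
  unfolding Qpi_def using Vstar_rw[OF assms(1-3), of "ys @ [y]"] assms(4-6) by auto

lemma cov:
  assumes "0 < \<Delta>" "\<Delta> \<le> 1" "n \<ge> 2" "optimal_policy {0,1,2} T (rw \<Delta> a) x pistar"
    "set ys \<subseteq> {0,1,2}" "length ys < T" "\<not> bad a ys"
  shows "coverage_at T n (rw \<Delta> a) pistar pisX x \<Delta> ys"
proof -
  let ?c = "real T - real (length ys) - 1"
  let ?Q = "Qpi T (rw \<Delta> a) pistar x ys"
  have vp: "valid_policy {0,1,2} T x pistar" using assms(4) by (simp add: optimal_policy_def)
  have img: "(\<lambda>i. ?Q (pisX i x ys)) ` {1..n} = {?Q 0, ?Q 1}"
  proof
    show "(\<lambda>i. ?Q (pisX i x ys)) ` {1..n} \<subseteq> {?Q 0, ?Q 1}" by (auto simp: pisX_def)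
    have "?Q 0 = ?Q (pisX 1 x ys)" "?Q 1 = ?Q (pisX 2 x ys)" by (auto simp: pisX_def)
    moreover have "(1::nat) \<in> {1..n}" "(2::nat) \<in> {1..n}" using assms(3) by auto
    ultimately show "{?Q 0, ?Q 1} \<subseteq> (\<lambda>i. ?Q (pisX i x ys)) ` {1..n}" by blast
  qed
  have Q0: "?Q 0 = rw \<Delta> a x (ys @ [0]) + ?c" by (rule Q_rw) (use assms in auto)
  have Q1: "?Q 1 = rw \<Delta> a x (ys @ [1]) + ?c" by (rule Q_rw) (use assms in auto)
  have "pistar x ys \<in> {0,1,2}" using vp assms(5,6) by (auto simp: valid_policy_def)
  have Qp: "?Q (pistar x ys) = real T - real (length ys)"
    unfolding Qpi_def using Vpi_step[OF assms(6), of "rw \<Delta> a" pistar x]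
      Vstar_rw[OF assms(1,2,4,5)] assms(6) by simp
  have g: "rw \<Delta> a x (ys @ [0]) \<ge> 1 - \<Delta>" using rw_good assms(1,7) by blast
  have b0: "rw \<Delta> a x (ys @ [0]) \<le> 1" and b1: "rw \<Delta> a x (ys @ [1]) \<le> 1"
    using rw_bounds assms(1,2) by auto
  show ?thesis unfolding coverage_at_def img Q0 Q1 Qp using g b0 b1
    by (simp add: max_def)
qed


lemma alg_len: "length (alg_gen Y T r ps pis A x t) = t"
  by (induction t) (auto simp: Let_def)

lemma alg_set: "(\<forall>i x ys. pis i x ys \<in> S) \<Longrightarrow> set (alg_gen Y T r ps pis A x t) \<subseteq> S"
  by (induction t) (auto simp: Let_def)

lemma alg_hd: "alg_gen Y T r ps pis A x (Suc t) \<noteq> [] \<and>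
   hd (alg_gen Y T r ps pis A x (Suc t)) = pis (A (observe Y T r ps x [])) x []"
proof (induction t)
  case 0 then show ?case by simp
next
  case (Suc t)
  have "alg_gen Y T r ps pis A x (Suc (Suc t)) = alg_gen Y T r ps pis A x (Suc t) @
     [pis (A (observe Y T r ps x (alg_gen Y T r ps pis A x (Suc t)))) x (alg_gen Y T r ps pis A x (Suc t))]"
    by (simp only: alg_gen.simps Let_def)
  then show ?case using Suc by simp
qed

lemma route_rep: "k \<le> T \<Longrightarrow> route_gen pisX (replicate T j) x k = replicate k (if j = 2 then 1 else 0)"
  by (induction k) (auto simp: Let_def pisX_def replicate_append_same)

lemma part_i:
  assumes "0 < \<Delta>" "\<Delta> \<le> 1" "n \<ge> 2" "T > 0" "a \<in> {0,1}"
    and opt: "optimal_policy {0,1,2} T (rw \<Delta> a) 0 pistar"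
  shows "(\<exists>\<epsilon>. 0 \<le> \<epsilon> \<and> \<epsilon> \<le> 1 \<and> \<epsilon> \<le> \<Delta> \<and>
          (\<exists>P. length P = T \<and> set P \<subseteq> {1..n} \<and>
               Vpi T (rw \<Delta> a) pistar 0 [] = VP (rw \<Delta> a) pisX P 0 + \<epsilon>)) \<and>
       (\<forall>t<T. coverage_at T n (rw \<Delta> a) pistar pisX 0 \<Delta> (rollout pistar 0 [] t)) \<and>
       (\<forall>ys. set ys \<subseteq> {0,1,2} \<and> length ys < T \<and>
             (\<exists>zs. set zs \<subseteq> {0,1,2} \<and> length (ys @ zs) = T \<and>
                   totR (rw \<Delta> a) 0 (ys @ zs) \<ge> Vpi T (rw \<Delta> a) pistar 0 [] - \<Delta>)
             \<longrightarrow> coverage_at T n (rw \<Delta> a) pistar pisX 0 \<Delta> ys)"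
proof -
  have V0: "Vpi T (rw \<Delta> a) pistar 0 [] = real T"
    using Vstar_rw[OF assms(1,2) opt, of "[]"] by simp
  have C: "coverage_at T n (rw \<Delta> a) pistar pisX 0 \<Delta> ys"
    if "set ys \<subseteq> {0,1,2}" "length ys < T" "set zs \<subseteq> {0,1,2}" "length (ys @ zs) = T"
       "totR (rw \<Delta> a) 0 (ys @ zs) \<ge> Vpi T (rw \<Delta> a) pistar 0 [] - \<Delta>" for ys zs
  proof (cases "bad a ys")
    case True
    then have "totR (rw \<Delta> a) 0 (ys @ zs) \<le> real T - 2 * \<Delta>"
      using notnear assms(1,2) that(4) by blast
    then show ?thesis using that(5) V0 assms(1) by simp
  next
    case False
    then show ?thesis using cov[OF assms(1-3) opt] that by blast
  qed
  have P1: "\<exists>\<epsilon>. 0 \<le> \<epsilon> \<and> \<epsilon> \<le> 1 \<and> \<epsilon> \<le> \<Delta> \<and>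
          (\<exists>P. length P = T \<and> set P \<subseteq> {1..n} \<and>
               Vpi T (rw \<Delta> a) pistar 0 [] = VP (rw \<Delta> a) pisX P 0 + \<epsilon>)"
  proof (intro exI conjI)
    let ?P = "replicate T (a + 1)"
    show "length ?P = T" by simp
    show "set ?P \<subseteq> {1..n}" using assms(3,5) by auto
    have tok: "(if a + 1 = 2 then 1 else 0) = a" using assms(5) by auto
    have "VP (rw \<Delta> a) pisX ?P 0 = (\<Sum>i=1..T. rw \<Delta> a 0 (take i (replicate T a)))"
      unfolding VP_def totR_def using route_rep[of T T "a+1" 0] tok by simp
    also have "\<dots> = (\<Sum>i\<in>insert 1 {2..T}. rw \<Delta> a 0 (replicate i a))"
      by (rule sum.cong) (use assms(4) in auto)
    also have "\<dots> = (1 - \<Delta>) + (\<Sum>i\<in>{2..T}. 1)"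
    proof -
      have "(\<Sum>i\<in>{2..T}. rw \<Delta> a 0 (replicate i a)) = (\<Sum>i\<in>{2..T}. 1)"
        by (rule sum.cong) (auto simp: rw_def)
      moreover have "rw \<Delta> a 0 (replicate 1 a) = 1 - \<Delta>" using assms(5) by (auto simp: rw_def)
      ultimately show ?thesis by simp
    qed
    also have "\<dots> = real T - \<Delta>" using assms(4) by (simp add: of_nat_diff)
    finally show "Vpi T (rw \<Delta> a) pistar 0 [] = VP (rw \<Delta> a) pisX ?P 0 + \<Delta>" using V0 by simp
  qed (use assms in auto)
  have P2: "\<forall>t<T. coverage_at T n (rw \<Delta> a) pistar pisX 0 \<Delta> (rollout pistar 0 [] t)"
  proof (intro allI impI)
    fix t assume t: "t < T"
    have vp: "valid_policy {0,1,2} T 0 pistar" using opt by (simp add: optimal_policy_def)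
    obtain zs where zs: "rollout pistar 0 [] (t + (T - t)) = rollout pistar 0 [] t @ zs"
      using rollout_prefix by blast
    let ?W = "rollout pistar 0 [] T"
    have W: "?W = rollout pistar 0 [] t @ zs" using zs t by simp
    have sW: "set ?W \<subseteq> {0,1,2}" by (rule rollout_set[OF vp]) auto
    have lW: "length ?W = T" by (simp add: rollout_len)
    have tW: "totR (rw \<Delta> a) 0 ?W = Vpi T (rw \<Delta> a) pistar 0 []"
    proof -
      have "{0<..T} = {1..T}" by auto
      then show ?thesis unfolding totR_def Vpi_def Let_def lW by simp
    qed
    show "coverage_at T n (rw \<Delta> a) pistar pisX 0 \<Delta> (rollout pistar 0 [] t)"
      apply (rule C[of _ zs])
      using sW lW tW W t assms(1) by (auto simp: rollout_len)
  qed
  show ?thesis using P1 P2 C by blast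
qed


lemma obs0:
  assumes "0 < \<Delta>" "\<Delta> \<le> 1" "T > 0" "optimal_policy {0,1,2} T (rw \<Delta> a) 0 pistar"
  shows "observe {0,1,2} T (rw \<Delta> a) pistar 0 [] =
    (0, [], [], \<lambda>y. if y \<in> {0,1,2} then Some (rw \<Delta> 0 0 [y] + (real T - 1)) else None)"
proof -
  have "Qpi T (rw \<Delta> a) pistar 0 [] y = rw \<Delta> 0 0 [y] + (real T - 1)" if "y \<in> {0,1,2}" for y
    using Q_rw[OF assms(1,2,4), of "[]" y] that assms(3) by (simp add: rw_def)
  then show ?thesis unfolding observe_def by (auto intro!: ext)
qed

lemma part_ii:
  assumes "0 < \<Delta>" "\<Delta> \<le> 1" "T > 0" "even T" "a \<in> {0,1}"
    "optimal_policy {0,1,2} T (rw \<Delta> a) 0 pistar"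
    "pisX (A (observe {0,1,2} T (rw \<Delta> a) pistar 0 [])) 0 [] \<noteq> a"
  shows "V_alg {0,1,2} T (rw \<Delta> a) pistar pisX A 0 < Vpi T (rw \<Delta> a) pistar 0 [] - real T / 2 + 2"
proof -
  have V0: "Vpi T (rw \<Delta> a) pistar 0 [] = real T"
    using Vstar_rw[OF assms(1,2,6), of "[]"] by simp
  have T2: "T \<ge> 2" using assms(3,4) by presburger
  let ?z = "alg_gen {0,1,2} T (rw \<Delta> a) pistar pisX A 0 T"
  obtain t where tT: "T = Suc t" using assms(3) gr0_implies_Suc by blast
  have hz: "hd ?z \<noteq> a" "?z \<noteq> []" using alg_hd[of "{0,1,2}" T "rw \<Delta> a" pistar pisX A 0 t] assms(7) tT
    by auto
  have sz: "set ?z \<subseteq> {0,1}" by (rule alg_set) (auto simp: pisX_def)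
  have lz: "length ?z = T" by (rule alg_len)
  have z0: "rw \<Delta> a 0 (take i ?z) = 0" if "i \<in> {3..T}" for i
  proof -
    have ne: "take i ?z \<noteq> []" "length (take i ?z) = i" using that lz by auto
    have "hd (take i ?z) = hd ?z" using that hz by (simp add: hd_take)
    moreover have "hd ?z \<in> {0,1}" using hz sz by (meson hd_in_set subsetD)
    moreover have "take i ?z ! 1 \<in> {0,1}"
    proof -
      have "?z ! 1 \<in> set ?z" using that lz by (intro nth_mem) auto
      then show ?thesis using that sz by auto
    qed
    moreover have "last (take i ?z) \<in> {0,1}" using ne sz
      by (meson in_set_takeD last_in_set subsetD)
    ultimately show ?thesis using hz ne that unfolding rw_def by auto
  qed
  have "V_alg {0,1,2} T (rw \<Delta> a) pistar pisX A 0 \<le>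
        rw \<Delta> a 0 (take 1 ?z) + rw \<Delta> a 0 (take 2 ?z) + real (T - 2) * 0"
    unfolding V_alg_def totR_def lz by (rule sum_split3[OF T2]) (use z0 in auto)
  also have "\<dots> \<le> 2" using rw_bounds[OF assms(1,2)] by (smt (verit))
  finally show ?thesis using V0 assms(3) by simp
qed

theorem theorem1:
  fixes T n :: nat and \<Delta> :: real
  assumes "even T" and "T > 0" and "n \<ge> 2" and "0 < \<Delta>" and "\<Delta> \<le> 1"
  shows "\<exists>(x::nat) (Y::nat set) (pis::nat \<Rightarrow> policy) (\<R>::reward set).
    finite Y \<and> Y \<noteq> {} \<and>
    (\<forall>i\<in>{1..n}. valid_policy Y T x (pis i)) \<and>
    (\<forall>r\<in>\<R>. \<forall>ys. 0 \<le> r x ys \<and> r x ys \<le> 1) \<and>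
    (\<forall>r\<in>\<R>. \<forall>pistar. optimal_policy Y T r x pistar \<longrightarrow>
       (\<exists>\<epsilon>. 0 \<le> \<epsilon> \<and> \<epsilon> \<le> 1 \<and> \<epsilon> \<le> \<Delta> \<and>
          (\<exists>P. length P = T \<and> set P \<subseteq> {1..n} \<and>
               Vpi T r pistar x [] = VP r pis P x + \<epsilon>)) \<and>
       (\<forall>t<T. coverage_at T n r pistar pis x \<Delta> (rollout pistar x [] t)) \<and>
       (\<forall>ys. set ys \<subseteq> Y \<and> length ys < T \<and>
             (\<exists>zs. set zs \<subseteq> Y \<and> length (ys @ zs) = T \<and>
                   totR r x (ys @ zs) \<ge> Vpi T r pistar x [] - \<Delta>)
             \<longrightarrow> coverage_at T n r pistar pis x \<Delta> ys)) \<and>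
    (\<forall>A::observation \<Rightarrow> nat. (\<forall>ob. A ob \<in> {1..n}) \<longrightarrow>
       (\<exists>r\<in>\<R>. \<forall>pistar. optimal_policy Y T r x pistar \<longrightarrow>
          V_alg Y T r pistar pis A x < Vpi T r pistar x [] - real T / 2 + 2))"
proof (intro exI[of _ 0] exI[of _ "{0,1,2}"] exI[of _ pisX] exI[of _ "{rw \<Delta> 0, rw \<Delta> 1}"] conjI)
  show "finite {0::nat,1,2}" by simp
  show "{0::nat,1,2} \<noteq> {}" by simp
  show "\<forall>i\<in>{1..n}. valid_policy {0,1,2} T 0 (pisX i)" by (auto simp: valid_policy_def pisX_def)
  show "\<forall>r\<in>{rw \<Delta> 0, rw \<Delta> 1}. \<forall>ys. 0 \<le> r 0 ys \<and> r 0 ys \<le> 1"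
    using rw_bounds assms(4,5) by auto
  show "\<forall>A::observation \<Rightarrow> nat. (\<forall>ob. A ob \<in> {1..n}) \<longrightarrow>
       (\<exists>r\<in>{rw \<Delta> 0, rw \<Delta> 1}. \<forall>pistar. optimal_policy {0,1,2} T r 0 pistar \<longrightarrow>
          V_alg {0,1,2} T r pistar pisX A 0 < Vpi T r pistar 0 [] - real T / 2 + 2)"
  proof (intro allI impI)
    fix A :: "observation \<Rightarrow> nat"
    define O0 where "O0 = ((0::nat), ([]::nat list), ([]::real list),
       \<lambda>y. if y \<in> {0::nat,1,2} then Some (rw \<Delta> 0 0 [y] + (real T - 1)) else None)"
    define a where "a = (if pisX (A O0) 0 [] = 0 then 1 else (0::nat))"
    have a01: "a \<in> {0,1}" by (simp add: a_def)
    have ne: "pisX (A O0) 0 [] \<noteq> a" by (simp add: a_def pisX_def)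
    have "\<forall>pistar. optimal_policy {0,1,2} T (rw \<Delta> a) 0 pistar \<longrightarrow>
          V_alg {0,1,2} T (rw \<Delta> a) pistar pisX A 0 < Vpi T (rw \<Delta> a) pistar 0 [] - real T / 2 + 2"
    proof (intro allI impI)
      fix pistar assume opt: "optimal_policy {0,1,2} T (rw \<Delta> a) 0 pistar"
      have "observe {0,1,2} T (rw \<Delta> a) pistar 0 [] = O0"
        unfolding O0_def by (rule obs0[OF assms(4,5,2) opt])
      then show "V_alg {0,1,2} T (rw \<Delta> a) pistar pisX A 0 < Vpi T (rw \<Delta> a) pistar 0 [] - real T / 2 + 2"
        using part_ii[OF assms(4,5,2,1) a01 opt] ne by simp
    qed
    then show "\<exists>r\<in>{rw \<Delta> 0, rw \<Delta> 1}. \<forall>pistar. optimal_policy {0,1,2} T r 0 pistar \<longrightarrow>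
          V_alg {0,1,2} T r pistar pisX A 0 < Vpi T r pistar 0 [] - real T / 2 + 2"
      using a01 by auto
  qed
qed (use part_i[OF assms(4,5,3,2), of 0] part_i[OF assms(4,5,3,2), of 1] in auto)

end
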